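(* Let $\Lambda$ be a finitely aligned left cancellative small category. (1) For $\alpha,\beta\in\Lambda$ with $s(\alpha)=s(\beta)$, we have $\alpha\beta^*\in S_\Lambda^{\mathrm{Iso}}$ if and only if $\alpha\gamma\Lambda\cap\beta\gamma\Lambda\neq\emptyset$ for all $\gamma\in s(\beta)\Lambda$. (2) For $\alpha_i,\beta_i\in\Lambda$, $i=1,\dots,n$, with $s=\bigcup_{i=1}^n\alpha_i\beta_i^*\in S_\Lambda$, we have $s\in S_\Lambda^{\mathrm{Iso}}$ if and only if $\alpha_i\beta_i^*\in S_\Lambda^{\mathrm{Iso}}$ for all $i=1,\dots,n$.
   Context: $\Lambda$ is a small category (objects $\Lambda^0$, range $r$, source $s$), left cancellative, and finitely aligned: for all $\alpha,\beta$, $\alpha\Lambda\cap\beta\Lambda=\bigcup_{f\in F}f\Lambda$ for some finite $F$, where $\alpha\Lambda=\{\alpha\beta:s(\alpha)=r(\beta)\}$. Each $\alpha\in\Lambda$ is the partial bijection $s(\alpha)\Lambda\to\alpha\Lambda$, $\beta\mapsto\alpha\beta$, in the symmetric inverse monoid $\mathcal{I}(\Lambda)$ (composition on largest domain, zero the empty map), with inverse $\alpha^*:\alpha\beta\mapsto\beta$; $S_\Lambda$ is the inverse subsemigroup of $\mathcal{I}(\Lambda)$ generated by these; unions are unions of partial maps. For an inverse semigroup $S$ with natural order ($e\leqslant f$ iff $ef=e$ on idempotents), $S^{\mathrm{Iso}}=\{s\in S:ses^*e\neq0\text{ for every idempotent }0\neq e\leqslant s^*s\}$. *)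

theory Defs
  imports Main
begin

text \<open>A small category given by its set of morphisms Mor, its set of objects Obj
 (objects identified with their identity morphisms, so Obj is a subset of Mor),
 range rng, source src and composition cmp (cmp a b = ab, defined when
 src a = rng b).\<close>

definition small_category ::
  "'a set \<Rightarrow> 'a set \<Rightarrow> ('a \<Rightarrow> 'a) \<Rightarrow> ('a \<Rightarrow> 'a) \<Rightarrow> ('a \<Rightarrow> 'a \<Rightarrow> 'a) \<Rightarrow> bool" where
  "small_category Mor Obj rng src cmp \<longleftrightarrow>
     Obj \<subseteq> Mor \<and>
     (\<forall>a\<in>Mor. rng a \<in> Obj \<and> src a \<in> Obj) \<and>
     (\<forall>v\<in>Obj. rng v = v \<and> src v = v) \<and>
     (\<forall>a\<in>Mor. \<forall>b\<in>Mor. src a = rng b \<longrightarrow>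
        cmp a b \<in> Mor \<and> rng (cmp a b) = rng a \<and> src (cmp a b) = src b) \<and>
     (\<forall>a\<in>Mor. cmp (rng a) a = a \<and> cmp a (src a) = a) \<and>
     (\<forall>a\<in>Mor. \<forall>b\<in>Mor. \<forall>c\<in>Mor. src a = rng b \<longrightarrow> src b = rng c \<longrightarrow>
        cmp (cmp a b) c = cmp a (cmp b c))"

definition rideal :: "'a set \<Rightarrow> ('a \<Rightarrow> 'a) \<Rightarrow> ('a \<Rightarrow> 'a) \<Rightarrow> ('a \<Rightarrow> 'a \<Rightarrow> 'a) \<Rightarrow> 'a \<Rightarrow> 'a set" where
  "rideal Mor rng src cmp a = {cmp a b | b. b \<in> Mor \<and> src a = rng b}"

definition left_cancellative ::
  "'a set \<Rightarrow> ('a \<Rightarrow> 'a) \<Rightarrow> ('a \<Rightarrow> 'a) \<Rightarrow> ('a \<Rightarrow> 'a \<Rightarrow> 'a) \<Rightarrow> bool" where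
  "left_cancellative Mor rng src cmp \<longleftrightarrow>
     (\<forall>a\<in>Mor. \<forall>b\<in>Mor. \<forall>c\<in>Mor. src a = rng b \<longrightarrow> src a = rng c \<longrightarrow>
        cmp a b = cmp a c \<longrightarrow> b = c)"

definition finitely_aligned ::
  "'a set \<Rightarrow> ('a \<Rightarrow> 'a) \<Rightarrow> ('a \<Rightarrow> 'a) \<Rightarrow> ('a \<Rightarrow> 'a \<Rightarrow> 'a) \<Rightarrow> bool" where
  "finitely_aligned Mor rng src cmp \<longleftrightarrow>
     (\<forall>a\<in>Mor. \<forall>b\<in>Mor. \<exists>F. finite F \<and> F \<subseteq> Mor \<and>
        rideal Mor rng src cmp a \<inter> rideal Mor rng src cmp b
          = (\<Union>f\<in>F. rideal Mor rng src cmp f))"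

definition mor_map ::
  "'a set \<Rightarrow> ('a \<Rightarrow> 'a) \<Rightarrow> ('a \<Rightarrow> 'a) \<Rightarrow> ('a \<Rightarrow> 'a \<Rightarrow> 'a) \<Rightarrow> 'a \<Rightarrow> ('a \<rightharpoonup> 'a)" where
  "mor_map Mor rng src cmp a = (\<lambda>x. if x \<in> Mor \<and> rng x = src a then Some (cmp a x) else None)"

definition pinv :: "('a \<rightharpoonup> 'a) \<Rightarrow> ('a \<rightharpoonup> 'a)" where
  "pinv f = (\<lambda>y. if y \<in> ran f then Some (THE x. f x = Some y) else None)"

text \<open>S_Lambda: the inverse subsemigroup of the symmetric inverse monoid generated by
 the maps \<alpha> and \<alpha>^*. The product st is map composition (first t, then s).\<close>
inductive_set S_Lambda ::
  "'a set \<Rightarrow> ('a \<Rightarrow> 'a) \<Rightarrow> ('a \<Rightarrow> 'a) \<Rightarrow> ('a \<Rightarrow> 'a \<Rightarrow> 'a) \<Rightarrow> ('a \<rightharpoonup> 'a) set"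
  for Mor rng src cmp where
  gen: "a \<in> Mor \<Longrightarrow> mor_map Mor rng src cmp a \<in> S_Lambda Mor rng src cmp"
| gen_inv: "a \<in> Mor \<Longrightarrow> pinv (mor_map Mor rng src cmp a) \<in> S_Lambda Mor rng src cmp"
| mult: "f \<in> S_Lambda Mor rng src cmp \<Longrightarrow> g \<in> S_Lambda Mor rng src cmp \<Longrightarrow>
          (f \<circ>\<^sub>m g) \<in> S_Lambda Mor rng src cmp"

text \<open>S Iso for an inverse semigroup S of partial maps (zero = empty map,
 e \<le> f iff e f = e on idempotents).\<close>
definition Iso :: "('a \<rightharpoonup> 'a) set \<Rightarrow> ('a \<rightharpoonup> 'a) set" where
  "Iso S = {t \<in> S. \<forall>e\<in>S. (e \<circ>\<^sub>m e = e \<and> e \<noteq> Map.empty \<and> e \<circ>\<^sub>m (pinv t \<circ>\<^sub>m t) = e)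
              \<longrightarrow> t \<circ>\<^sub>m e \<circ>\<^sub>m pinv t \<circ>\<^sub>m e \<noteq> Map.empty}"

text \<open>Graph of a partial map (used for unions of partial maps).\<close>
definition map_graph :: "('a \<rightharpoonup> 'b) \<Rightarrow> ('a \<times> 'b) set" where
  "map_graph f = {(x, y). f x = Some y}"

end

theory Submission
  imports Defs
begin

lemma pinv_iff:
  assumes inj: "inj_on f (dom f)"
  shows "pinv f y = Some x \<longleftrightarrow> f x = Some y"
proof
  assume h: "pinv f y = Some x"
  have y: "y \<in> ran f"
  proof (rule ccontr)
    assume "y \<notin> ran f" then have "pinv f y = None" by (simp add: pinv_def)
    then show False using h by simp
  qed
  then have x: "x = (THE x. f x = Some y)" using h by (simp add: pinv_def)
  from y obtain x0 where x0: "f x0 = Some y" unfolding ran_def by blast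
  have u: "x' = x0" if "f x' = Some y" for x'
    by (rule inj_onD[OF inj]) (use that x0 in \<open>simp_all add: dom_def\<close>)
  have "(THE x. f x = Some y) = x0" by (rule the_equality[of "\<lambda>x. f x = Some y", OF x0 u])
  then show "f x = Some y" using x x0 by simp
next
  assume h: "f x = Some y"
  then have r: "y \<in> ran f" unfolding ran_def by blast
  have u: "x' = x" if "f x' = Some y" for x'
    by (rule inj_onD[OF inj]) (use that h in \<open>simp_all add: dom_def\<close>)
  have "(THE x'. f x' = Some y) = x" by (rule the_equality[of "\<lambda>x. f x = Some y", OF h u])
  then show "pinv f y = Some x" using r by (simp add: pinv_def)
qed

context
  fixes M Ob :: "'a set" and r s :: "'a \<Rightarrow> 'a" and c :: "'a \<Rightarrow> 'a \<Rightarrow> 'a"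
  assumes cat: "small_category M Ob r s c" and lc: "left_cancellative M r s c"
begin

lemma H1: "Ob \<subseteq> M" using cat unfolding small_category_def by (elim conjE)
lemma H2: "\<forall>a\<in>M. r a \<in> Ob \<and> s a \<in> Ob" using cat unfolding small_category_def by (elim conjE)
lemma H3: "\<forall>v\<in>Ob. r v = v \<and> s v = v" using cat unfolding small_category_def by (elim conjE)
lemma H4: "\<forall>a\<in>M. \<forall>b\<in>M. s a = r b \<longrightarrow> c a b \<in> M \<and> r (c a b) = r a \<and> s (c a b) = s b"
  using cat unfolding small_category_def by (elim conjE)
lemma H5: "\<forall>a\<in>M. c (r a) a = a \<and> c a (s a) = a" using cat unfolding small_category_def by (elim conjE)
lemma H6: "\<forall>a\<in>M. \<forall>b\<in>M. \<forall>c'\<in>M. s a = r b \<longrightarrow> s b = r c' \<longrightarrow> c (c a b) c' = c a (c b c')"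
  using cat unfolding small_category_def by (elim conjE)

lemma cf_ob: "x \<in> M \<Longrightarrow> s x \<in> M \<and> r (s x) = s x"
proof -
  assume x: "x \<in> M"
  have "s x \<in> Ob" using H2 x by simp
  then show ?thesis using H1 H3 by auto
qed

lemma cf_comp: "x \<in> M \<Longrightarrow> y \<in> M \<Longrightarrow> s x = r y \<Longrightarrow> c x y \<in> M \<and> r (c x y) = r x \<and> s (c x y) = s y"
  using H4 by simp

lemma cf_unit: "x \<in> M \<Longrightarrow> c x (s x) = x"
  using H5 by simp

lemma cf_assoc: "x \<in> M \<Longrightarrow> y \<in> M \<Longrightarrow> z \<in> M \<Longrightarrow> s x = r y \<Longrightarrow> s y = r z \<Longrightarrow> c (c x y) z = c x (c y z)"
  using H6 by simp

lemma cf_lc: "x \<in> M \<Longrightarrow> y \<in> M \<Longrightarrow> z \<in> M \<Longrightarrow> s x = r y \<Longrightarrow> s x = r z \<Longrightarrow> c x y = c x z \<Longrightarrow> y = z"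
  using lc unfolding left_cancellative_def by simp

lemma mm_iff: "mor_map M r s c a x = Some y \<longleftrightarrow> x \<in> M \<and> r x = s a \<and> y = c a x"
  by (auto simp: mor_map_def)

lemma mm_inj: "a \<in> M \<Longrightarrow> inj_on (mor_map M r s c a) (dom (mor_map M r s c a))"
  unfolding inj_on_def dom_def mor_map_def using cf_lc by (auto split: if_splits)

definition good :: "('a \<rightharpoonup> 'a) \<Rightarrow> bool" where
  "good f \<longleftrightarrow> inj_on f (dom f) \<and> (\<forall>x y. f x = Some y \<longrightarrow> x \<in> M \<and> y \<in> M \<and> s y = s x \<and>
      (\<forall>d\<in>M. r d = s x \<longrightarrow> f (c x d) = Some (c y d)))"

lemma good_inj: "good f \<Longrightarrow> inj_on f (dom f)"
  unfolding good_def by simp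
lemma good_D: "good f \<Longrightarrow> f x = Some y \<Longrightarrow> x \<in> M \<and> y \<in> M \<and> s y = s x"
  unfolding good_def by simp
lemma good_R: "good f \<Longrightarrow> f x = Some y \<Longrightarrow> d \<in> M \<Longrightarrow> r d = s x \<Longrightarrow> f (c x d) = Some (c y d)"
  unfolding good_def by simp

lemma S_good: "f \<in> S_Lambda M r s c \<Longrightarrow> good f"
proof (induction rule: S_Lambda.induct)
  case (gen a)
  show ?case unfolding good_def
  proof (intro conjI allI impI ballI)
    show "inj_on (mor_map M r s c a) (dom (mor_map M r s c a))" by (rule mm_inj[OF gen])
  next
    fix x y assume h: "mor_map M r s c a x = Some y"
    then have x: "x \<in> M" "r x = s a" "y = c a x" by (simp_all add: mm_iff)
    have cc: "c a x \<in> M \<and> r (c a x) = r a \<and> s (c a x) = s x" using cf_comp[OF gen x(1)] x(2) by simp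
    show "x \<in> M" using x by simp
    show "y \<in> M" using x cc by simp
    show "s y = s x" using x cc by simp
    fix d assume d: "d \<in> M" "r d = s x"
    have cd: "c x d \<in> M \<and> r (c x d) = r x \<and> s (c x d) = s d" using cf_comp[OF x(1) d(1)] d(2) by simp
    have "c a (c x d) = c y d" using cf_assoc[OF gen x(1) d(1)] x d by simp
    then show "mor_map M r s c a (c x d) = Some (c y d)" using cd x by (simp add: mm_iff)
  qed
next
  case (gen_inv a)
  have pi: "pinv (mor_map M r s c a) y = Some x \<longleftrightarrow> x \<in> M \<and> r x = s a \<and> y = c a x" for x y
    using pinv_iff[OF mm_inj[OF gen_inv], of y x] mm_iff[of a x y] by simp
  show ?case unfolding good_def
  proof (intro conjI allI impI ballI)
    show "inj_on (pinv (mor_map M r s c a)) (dom (pinv (mor_map M r s c a)))"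
    proof (rule inj_onI)
      fix x1 x2 assume "x1 \<in> dom (pinv (mor_map M r s c a))" "x2 \<in> dom (pinv (mor_map M r s c a))"
        and eq: "pinv (mor_map M r s c a) x1 = pinv (mor_map M r s c a) x2"
      then obtain k where k1: "pinv (mor_map M r s c a) x1 = Some k" by (auto simp: dom_def)
      then have k2: "pinv (mor_map M r s c a) x2 = Some k" using eq by simp
      show "x1 = x2" using pi[THEN iffD1, OF k1] pi[THEN iffD1, OF k2] by simp
    qed
  next
    fix x y assume h: "pinv (mor_map M r s c a) x = Some y"
    then have y: "y \<in> M" "r y = s a" "x = c a y" using pi by simp_all
    have cc: "c a y \<in> M \<and> r (c a y) = r a \<and> s (c a y) = s y" using cf_comp[OF gen_inv y(1)] y(2) by simp
    show "x \<in> M" using y cc by simp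
    show "y \<in> M" using y by simp
    show "s y = s x" using y cc by simp
    fix d assume d: "d \<in> M" "r d = s x"
    have sx: "s x = s y" using y cc by simp
    have cd: "c y d \<in> M \<and> r (c y d) = r y \<and> s (c y d) = s d" using cf_comp[OF y(1) d(1)] d(2) sx by simp
    have "c x d = c a (c y d)" using cf_assoc[OF gen_inv y(1) d(1)] y d sx by simp
    then show "pinv (mor_map M r s c a) (c x d) = Some (c y d)" using pi cd y by simp
  qed
next
  case (mult f g)
  show ?case unfolding good_def
  proof (intro conjI allI impI ballI)
    show "inj_on (f \<circ>\<^sub>m g) (dom (f \<circ>\<^sub>m g))"
    proof (rule inj_onI)
      fix x1 x2 assume "x1 \<in> dom (f \<circ>\<^sub>m g)" "x2 \<in> dom (f \<circ>\<^sub>m g)" and eq: "(f \<circ>\<^sub>m g) x1 = (f \<circ>\<^sub>m g) x2"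
      then obtain z where z1: "(f \<circ>\<^sub>m g) x1 = Some z" by (auto simp: dom_def)
      then have z2: "(f \<circ>\<^sub>m g) x2 = Some z" using eq by simp
      obtain y1 where y1: "g x1 = Some y1" "f y1 = Some z" using z1 by (auto simp: map_comp_Some_iff)
      obtain y2 where y2: "g x2 = Some y2" "f y2 = Some z" using z2 by (auto simp: map_comp_Some_iff)
      have "y1 = y2" by (rule inj_onD[OF good_inj[OF mult.IH(1)]]) (use y1 y2 in \<open>auto simp: dom_def\<close>)
      then show "x1 = x2"
        by (intro inj_onD[OF good_inj[OF mult.IH(2)]]) (use y1 y2 in \<open>auto simp: dom_def\<close>)
    qed
  next
    fix x z assume "(f \<circ>\<^sub>m g) x = Some z"
    then obtain y where y: "g x = Some y" "f y = Some z" by (auto simp: map_comp_Some_iff)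
    have D1: "y \<in> M \<and> z \<in> M \<and> s z = s y" by (rule good_D[OF mult.IH(1) y(2)])
    have D2: "x \<in> M \<and> y \<in> M \<and> s y = s x" by (rule good_D[OF mult.IH(2) y(1)])
    show "x \<in> M" "z \<in> M" "s z = s x" using D1 D2 by simp_all
    fix d assume d: "d \<in> M" "r d = s x"
    have "g (c x d) = Some (c y d)" by (rule good_R[OF mult.IH(2) y(1) d])
    moreover have "f (c y d) = Some (c z d)" by (rule good_R[OF mult.IH(1) y(2) d(1)]) (use D2 d in simp)
    ultimately show "(f \<circ>\<^sub>m g) (c x d) = Some (c z d)" by (simp add: map_comp_Some_iff)
  qed
qed

lemma idem_fix:
  assumes g: "good e" and ee: "e \<circ>\<^sub>m e = e" and ez: "e z = Some z'"
  shows "z' = z"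
proof -
  have "(e \<circ>\<^sub>m e) z = Some z'" using ee ez by simp
  then obtain k where k: "e z = Some k" "e k = Some z'" by (auto simp: map_comp_Some_iff)
  have "k = z'" using k(1) ez by simp
  then have ez': "e z' = Some z'" using k(2) by simp
  show ?thesis
    by (rule inj_onD[OF good_inj[OF g]]) (use ez ez' in \<open>simp_all add: dom_def\<close>)
qed

lemma suff:
  assumes tS: "t \<in> S_Lambda M r s c"
    and H: "\<And>z y. t z = Some y \<Longrightarrow> \<exists>\<mu> \<nu>. \<mu> \<in> M \<and> \<nu> \<in> M \<and> r \<mu> = s z \<and> r \<nu> = s z \<and>
                   t (c z \<mu>) = Some (c z \<nu>)"
  shows "t \<in> Iso (S_Lambda M r s c)"
proof -
  have gt: "good t" using S_good tS by blast
  have "t \<circ>\<^sub>m e \<circ>\<^sub>m pinv t \<circ>\<^sub>m e \<noteq> Map.empty"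
    if e: "e \<in> S_Lambda M r s c" "e \<circ>\<^sub>m e = e" "e \<noteq> Map.empty" "e \<circ>\<^sub>m (pinv t \<circ>\<^sub>m t) = e" for e
  proof -
    have ge: "good e" using S_good e(1) by blast
    have "\<exists>z. e z \<noteq> None"
    proof (rule ccontr)
      assume "\<not> ?thesis" then have "e = Map.empty" by (auto intro!: ext)
      then show False using e(3) by simp
    qed
    then obtain z z' where h: "e z = Some z'" by auto
    have "z' = z" by (rule idem_fix[OF ge e(2) h])
    then have ez: "e z = Some z" using h by simp
    have "(e \<circ>\<^sub>m (pinv t \<circ>\<^sub>m t)) z = e z" using e(4) by simp
    have "t z \<noteq> None"
    proof
      assume "t z = None"
      then have "(e \<circ>\<^sub>m (pinv t \<circ>\<^sub>m t)) z = None" by (simp add: map_comp_def)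
      then show False using e(4) ez by simp
    qed
    then obtain y where ty: "t z = Some y" by auto
    obtain \<mu> \<nu> where mn: "\<mu> \<in> M" "\<nu> \<in> M" "r \<mu> = s z" "r \<nu> = s z" "t (c z \<mu>) = Some (c z \<nu>)"
      using H[OF ty] by (elim exE conjE)
    have ex: "e (c z \<nu>) = Some (c z \<nu>)" using good_R[OF ge ez mn(2) mn(4)] .
    have e2: "e (c z \<mu>) = Some (c z \<mu>)" using good_R[OF ge ez mn(1) mn(3)] .
    have pt: "pinv t (c z \<nu>) = Some (c z \<mu>)" by (rule pinv_iff[OF good_inj[OF gt], THEN iffD2, OF mn(5)])
    have "(t \<circ>\<^sub>m e \<circ>\<^sub>m pinv t \<circ>\<^sub>m e) (c z \<nu>) = Some (c z \<nu>)"
      by (simp add: ex pt e2 mn(5) map_comp_def)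
    then show ?thesis by (metis option.distinct(1))
  qed
  then show ?thesis using tS by (simp add: Iso_def)
qed

lemma nec:
  assumes tI: "t \<in> Iso (S_Lambda M r s c)" and aM: "a \<in> M"
    and dm: "\<And>x. x \<in> rideal M r s c a \<Longrightarrow> t x \<noteq> None"
  shows "\<exists>x u. x \<in> rideal M r s c a \<and> u \<in> rideal M r s c a \<and> t u = Some x"
proof -
  have tS: "t \<in> S_Lambda M r s c" using tI by (simp add: Iso_def)
  have gt: "good t" using S_good tS by blast
  have injt: "inj_on t (dom t)" using good_inj[OF gt] .
  define e where "e = mor_map M r s c a \<circ>\<^sub>m pinv (mor_map M r s c a)"
  have pi: "pinv (mor_map M r s c a) y = Some x \<longleftrightarrow> x \<in> M \<and> r x = s a \<and> y = c a x" for x y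
    using pinv_iff[OF mm_inj[OF aM]] mm_iff by simp
  have e_eq: "e x = (if x \<in> rideal M r s c a then Some x else None)" for x
  proof (cases "x \<in> rideal M r s c a")
    case True
    then obtain b where b: "b \<in> M" "s a = r b" "x = c a b" by (auto simp: rideal_def)
    then have "pinv (mor_map M r s c a) x = Some b" using pi by simp
    moreover have "mor_map M r s c a b = Some x" using b mm_iff by simp
    ultimately show ?thesis using True by (simp add: e_def map_comp_def)
  next
    case False
    have "e x = None"
    proof (rule ccontr)
      assume "e x \<noteq> None"
      then obtain k z where "pinv (mor_map M r s c a) x = Some k" by (auto simp: e_def map_comp_def split: option.splits)
      then have "x \<in> rideal M r s c a" using pi by (auto simp: rideal_def)
      then show False using False by simp
    qed
    then show ?thesis using False by simp
  qed
  have eS: "e \<in> S_Lambda M r s c"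
    by (simp add: e_def S_Lambda.mult S_Lambda.gen S_Lambda.gen_inv aM)
  have ee: "e \<circ>\<^sub>m e = e" by (rule ext) (simp add: e_eq map_comp_def)
  have ara: "a \<in> rideal M r s c a"
    using cf_ob[OF aM] cf_unit[OF aM] unfolding rideal_def by force
  then have ne: "e \<noteq> Map.empty" using e_eq by (metis option.distinct(1))
  have ptt: "(pinv t \<circ>\<^sub>m t) x = (case t x of None \<Rightarrow> None | Some y \<Rightarrow> Some x)" for x
    using pinv_iff[OF injt] by (auto simp: map_comp_def split: option.splits)
  have eord: "e \<circ>\<^sub>m (pinv t \<circ>\<^sub>m t) = e"
  proof (rule ext)
    fix x show "(e \<circ>\<^sub>m (pinv t \<circ>\<^sub>m t)) x = e x"
      using dm[of x] by (cases "t x") (auto simp: ptt e_eq)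
  qed
  have all: "\<forall>e\<in>S_Lambda M r s c. (e \<circ>\<^sub>m e = e \<and> e \<noteq> Map.empty \<and> e \<circ>\<^sub>m (pinv t \<circ>\<^sub>m t) = e)
              \<longrightarrow> t \<circ>\<^sub>m e \<circ>\<^sub>m pinv t \<circ>\<^sub>m e \<noteq> Map.empty"
    using tI unfolding Iso_def by simp
  have ne2: "t \<circ>\<^sub>m e \<circ>\<^sub>m pinv t \<circ>\<^sub>m e \<noteq> Map.empty"
    using all[rule_format, OF eS] ee ne eord by simp
  have "\<exists>x. (t \<circ>\<^sub>m e \<circ>\<^sub>m pinv t \<circ>\<^sub>m e) x \<noteq> None"
  proof (rule ccontr)
    assume "\<not> ?thesis"
    then have "t \<circ>\<^sub>m e \<circ>\<^sub>m pinv t \<circ>\<^sub>m e = Map.empty" by (intro ext) simp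
    then show False using ne2 by simp
  qed
  then obtain x where "(t \<circ>\<^sub>m e \<circ>\<^sub>m pinv t \<circ>\<^sub>m e) x \<noteq> None" by blast
  then obtain u w where x: "x \<in> rideal M r s c a" and u: "pinv t x = Some u" "u \<in> rideal M r s c a"
      and "t u = Some w"
    by (auto simp: map_comp_def e_eq split: option.splits if_splits)
  then have "t u = Some x" using pinv_iff[OF injt] by blast
  then show ?thesis using x u by blast
qed

lemma t_iff:
  assumes "a \<in> M" "b \<in> M"
  shows "(mor_map M r s c a \<circ>\<^sub>m pinv (mor_map M r s c b)) z = Some y \<longleftrightarrow>
    (\<exists>g. g \<in> M \<and> r g = s b \<and> r g = s a \<and> z = c b g \<and> y = c a g)"
  using pinv_iff[OF mm_inj[OF assms(2)]] mm_iff by (auto simp: map_comp_Some_iff)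

lemma t_S: "a \<in> M \<Longrightarrow> b \<in> M \<Longrightarrow> (mor_map M r s c a \<circ>\<^sub>m pinv (mor_map M r s c b)) \<in> S_Lambda M r s c"
  by (simp add: S_Lambda.mult S_Lambda.gen S_Lambda.gen_inv)

end

theorem lemma4p3:
  fixes Mor Obj :: "'a set" and rng src :: "'a \<Rightarrow> 'a" and cmp :: "'a \<Rightarrow> 'a \<Rightarrow> 'a"
  assumes cat: "small_category Mor Obj rng src cmp"
    and lc: "left_cancellative Mor rng src cmp"
    and fa: "finitely_aligned Mor rng src cmp"
  shows "(\<forall>a\<in>Mor. \<forall>b\<in>Mor. src a = src b \<longrightarrow>
            ((mor_map Mor rng src cmp a \<circ>\<^sub>m pinv (mor_map Mor rng src cmp b))
                \<in> Iso (S_Lambda Mor rng src cmp)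
             \<longleftrightarrow> (\<forall>g\<in>Mor. rng g = src b \<longrightarrow>
                    rideal Mor rng src cmp (cmp a g) \<inter> rideal Mor rng src cmp (cmp b g) \<noteq> {})))
       \<and>
       (\<forall>(n::nat) (as::nat \<Rightarrow> 'a) (bs::nat \<Rightarrow> 'a) t.
          (\<forall>i\<in>{1..n}. as i \<in> Mor \<and> bs i \<in> Mor) \<longrightarrow>
          t \<in> S_Lambda Mor rng src cmp \<longrightarrow>
          map_graph t = (\<Union>i\<in>{1..n}. map_graph
             (mor_map Mor rng src cmp (as i) \<circ>\<^sub>m pinv (mor_map Mor rng src cmp (bs i)))) \<longrightarrow>
          (t \<in> Iso (S_Lambda Mor rng src cmp) \<longleftrightarrow>
           (\<forall>i\<in>{1..n}. (mor_map Mor rng src cmp (as i) \<circ>\<^sub>m pinv (mor_map Mor rng src cmp (bs i)))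
                          \<in> Iso (S_Lambda Mor rng src cmp))))"
proof -
  let ?S = "S_Lambda Mor rng src cmp"
  let ?R = "rideal Mor rng src cmp"
  let ?T = "\<lambda>a b. mor_map Mor rng src cmp a \<circ>\<^sub>m pinv (mor_map Mor rng src cmp b)"
  have P1: "\<forall>a\<in>Mor. \<forall>b\<in>Mor. src a = src b \<longrightarrow>
            (?T a b \<in> Iso ?S \<longleftrightarrow> (\<forall>g\<in>Mor. rng g = src b \<longrightarrow> ?R (cmp a g) \<inter> ?R (cmp b g) \<noteq> {}))"
  proof (intro ballI impI iffI)
    fix a b assume a: "a \<in> Mor" and b: "b \<in> Mor" and ab: "src a = src b"
    {
      assume I: "?T a b \<in> Iso ?S"
      fix g assume g: "g \<in> Mor" "rng g = src b"
      have cbg: "cmp b g \<in> Mor \<and> rng (cmp b g) = rng b \<and> src (cmp b g) = src g"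
        using cf_comp[OF cat lc b g(1)] g(2) by simp
      have cag: "cmp a g \<in> Mor \<and> rng (cmp a g) = rng a \<and> src (cmp a g) = src g"
        using cf_comp[OF cat lc a g(1)] g(2) ab by simp
      have dm: "?T a b x \<noteq> None" if x: "x \<in> ?R (cmp b g)" for x
      proof -
        obtain h where h: "h \<in> Mor" "src (cmp b g) = rng h" "x = cmp (cmp b g) h"
          using x unfolding rideal_def by blast
        have gh: "cmp g h \<in> Mor \<and> rng (cmp g h) = rng g \<and> src (cmp g h) = src h"
          using cf_comp[OF cat lc g(1) h(1)] h(2) cbg by simp
        have "x = cmp b (cmp g h)" using cf_assoc[OF cat lc b g(1) h(1)] h g(2) cbg by simp
        then have "?T a b x = Some (cmp a (cmp g h))"
          using t_iff[OF cat lc a b, of x "cmp a (cmp g h)"] gh g(2) ab by auto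
        then show ?thesis by simp
      qed
      obtain x u where xu: "x \<in> ?R (cmp b g)" "u \<in> ?R (cmp b g)" "?T a b u = Some x"
        using nec[OF cat lc I conjunct1[OF cbg] dm] by blast
      obtain h where h: "h \<in> Mor" "src (cmp b g) = rng h" "u = cmp (cmp b g) h"
        using xu(2) unfolding rideal_def by blast
      obtain g' where g': "g' \<in> Mor" "rng g' = src b" "rng g' = src a" "u = cmp b g'" "x = cmp a g'"
        using t_iff[OF cat lc a b, of u x] xu(3) by blast
      have gh: "cmp g h \<in> Mor \<and> rng (cmp g h) = rng g \<and> src (cmp g h) = src h"
        using cf_comp[OF cat lc g(1) h(1)] h(2) cbg by simp
      have "u = cmp b (cmp g h)" using cf_assoc[OF cat lc b g(1) h(1)] h g(2) cbg by simp
      then have eq: "cmp b g' = cmp b (cmp g h)" using g'(4) by simp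
      have r1: "src b = rng g'" using g'(2) by simp
      have r2: "src b = rng (cmp g h)" using gh g(2) by simp
      have gg: "g' = cmp g h" by (rule cf_lc[OF cat lc b g'(1) conjunct1[OF gh] r1 r2 eq])
      have sa: "src a = rng g" using g(2) ab by simp
      have sg: "src g = rng h" using h(2) cbg by simp
      have "cmp (cmp a g) h = cmp a (cmp g h)" by (rule cf_assoc[OF cat lc a g(1) h(1) sa sg])
      then have "x = cmp (cmp a g) h" using g'(5) gg by simp
      then have "x \<in> ?R (cmp a g)" unfolding rideal_def using h cag cbg by auto
      then show "?R (cmp a g) \<inter> ?R (cmp b g) \<noteq> {}" using xu(1) by blast
    }
    {
      assume C: "\<forall>g\<in>Mor. rng g = src b \<longrightarrow> ?R (cmp a g) \<inter> ?R (cmp b g) \<noteq> {}"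
      show "?T a b \<in> Iso ?S"
      proof (rule suff[OF cat lc t_S[OF cat lc a b]])
        fix z y assume zy: "?T a b z = Some y"
        obtain g where g: "g \<in> Mor" "rng g = src b" "rng g = src a" "z = cmp b g" "y = cmp a g"
          using t_iff[OF cat lc a b, of z y] zy by blast
        have cbg: "cmp b g \<in> Mor \<and> rng (cmp b g) = rng b \<and> src (cmp b g) = src g"
          using cf_comp[OF cat lc b g(1)] g(2) by simp
        have cag: "cmp a g \<in> Mor \<and> rng (cmp a g) = rng a \<and> src (cmp a g) = src g"
          using cf_comp[OF cat lc a g(1)] g(3) by simp
        obtain w where w: "w \<in> ?R (cmp a g)" "w \<in> ?R (cmp b g)" using C g by blast
        obtain \<mu> where mu: "\<mu> \<in> Mor" "src (cmp a g) = rng \<mu>" "w = cmp (cmp a g) \<mu>"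
          using w(1) unfolding rideal_def by blast
        obtain \<nu> where nu: "\<nu> \<in> Mor" "src (cmp b g) = rng \<nu>" "w = cmp (cmp b g) \<nu>"
          using w(2) unfolding rideal_def by blast
        have sg: "src g = rng \<mu>" using mu(2) cag by simp
        have sb: "src b = rng g" using g(2) by simp
        have sa: "src a = rng g" using g(3) by simp
        have gm: "cmp g \<mu> \<in> Mor \<and> rng (cmp g \<mu>) = rng g \<and> src (cmp g \<mu>) = src \<mu>"
          by (rule cf_comp[OF cat lc g(1) mu(1) sg])
        have e1: "cmp (cmp b g) \<mu> = cmp b (cmp g \<mu>)" by (rule cf_assoc[OF cat lc b g(1) mu(1) sb sg])
        have e2: "cmp (cmp a g) \<mu> = cmp a (cmp g \<mu>)" by (rule cf_assoc[OF cat lc a g(1) mu(1) sa sg])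
        have ex: "\<exists>g'. g' \<in> Mor \<and> rng g' = src b \<and> rng g' = src a \<and> cmp z \<mu> = cmp b g' \<and> w = cmp a g'"
        proof (intro exI conjI)
          show "cmp g \<mu> \<in> Mor" using gm by (rule conjunct1)
          show "rng (cmp g \<mu>) = src b" using gm sb by simp
          show "rng (cmp g \<mu>) = src a" using gm sa by simp
          show "cmp z \<mu> = cmp b (cmp g \<mu>)" using e1 g(4) by simp
          show "w = cmp a (cmp g \<mu>)" using e2 mu(3) by simp
        qed
        have "?T a b (cmp z \<mu>) = Some w" by (rule t_iff[OF cat lc a b, THEN iffD2, OF ex])
        then have "?T a b (cmp z \<mu>) = Some (cmp z \<nu>)" using nu(3) g(4) by simp
        moreover have "rng \<mu> = src z" "rng \<nu> = src z" using mu nu cag cbg g(4) by simp_all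
        ultimately show "\<exists>\<mu> \<nu>. \<mu> \<in> Mor \<and> \<nu> \<in> Mor \<and> rng \<mu> = src z \<and> rng \<nu> = src z \<and>
                   ?T a b (cmp z \<mu>) = Some (cmp z \<nu>)" using mu(1) nu(1) by blast
      qed
    }
  qed
  have P2: "\<forall>(n::nat) (as::nat \<Rightarrow> 'a) (bs::nat \<Rightarrow> 'a) t.
          (\<forall>i\<in>{1..n}. as i \<in> Mor \<and> bs i \<in> Mor) \<longrightarrow>
          t \<in> ?S \<longrightarrow>
          map_graph t = (\<Union>i\<in>{1..n}. map_graph (?T (as i) (bs i))) \<longrightarrow>
          (t \<in> Iso ?S \<longleftrightarrow> (\<forall>i\<in>{1..n}. ?T (as i) (bs i) \<in> Iso ?S))"
  proof (intro allI impI)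
    fix n :: nat and as bs :: "nat \<Rightarrow> 'a" and t
    assume ab: "\<forall>i\<in>{1..n}. as i \<in> Mor \<and> bs i \<in> Mor" and tS: "t \<in> ?S"
      and gr: "map_graph t = (\<Union>i\<in>{1..n}. map_graph (?T (as i) (bs i)))"
    have G1: "t z = Some y" if i: "i \<in> {1..n}" and h: "?T (as i) (bs i) z = Some y" for i z y
    proof -
      have "(z, y) \<in> map_graph (?T (as i) (bs i))" using h by (simp add: map_graph_def)
      then have "(z, y) \<in> map_graph t" using gr i by blast
      then show ?thesis by (simp add: map_graph_def)
    qed
    have G2: "\<exists>i\<in>{1..n}. ?T (as i) (bs i) z = Some y" if h: "t z = Some y" for z y
    proof -
      have "(z, y) \<in> map_graph t" using h by (simp add: map_graph_def)
      then have "(z, y) \<in> (\<Union>i\<in>{1..n}. map_graph (?T (as i) (bs i)))" using gr by simp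
      then obtain i where "i \<in> {1..n}" "(z, y) \<in> map_graph (?T (as i) (bs i))" by blast
      then show ?thesis by (auto simp: map_graph_def)
    qed
    have TS: "?T (as i) (bs i) \<in> ?S" if "i \<in> {1..n}" for i
      using t_S[OF cat lc] ab that by blast
    show "t \<in> Iso ?S \<longleftrightarrow> (\<forall>i\<in>{1..n}. ?T (as i) (bs i) \<in> Iso ?S)"
    proof (intro iffI ballI)
      fix i assume I: "t \<in> Iso ?S" and i: "i \<in> {1..n}"
      have gT: "good Mor rng src cmp (?T (as i) (bs i))" using S_good[OF cat lc TS[OF i]] .
      show "?T (as i) (bs i) \<in> Iso ?S"
      proof (rule suff[OF cat lc TS[OF i]])
        fix z y assume zy: "?T (as i) (bs i) z = Some y"
        have zM: "z \<in> Mor" using good_D[OF cat lc gT zy] by simp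
        have dm: "t x \<noteq> None" if x: "x \<in> ?R z" for x
        proof -
          obtain h where h: "h \<in> Mor" "src z = rng h" "x = cmp z h"
            using x unfolding rideal_def by blast
          have "?T (as i) (bs i) x = Some (cmp y h)" using good_R[OF cat lc gT zy h(1)] h by simp
          then show ?thesis using G1[OF i] by (metis option.distinct(1))
        qed
        obtain x u where xu: "x \<in> ?R z" "u \<in> ?R z" "t u = Some x"
          using nec[OF cat lc I zM dm] by blast
        obtain \<mu> where mu: "\<mu> \<in> Mor" "src z = rng \<mu>" "u = cmp z \<mu>"
          using xu(2) unfolding rideal_def by blast
        obtain \<nu> where nu: "\<nu> \<in> Mor" "src z = rng \<nu>" "x = cmp z \<nu>"
          using xu(1) unfolding rideal_def by blast
        have T1: "?T (as i) (bs i) u = Some (cmp y \<mu>)" using good_R[OF cat lc gT zy mu(1)] mu by simp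
        then have "t u = Some (cmp y \<mu>)" using G1[OF i] by blast
        then have "cmp y \<mu> = cmp z \<nu>" using xu(3) nu(3) by simp
        then have "?T (as i) (bs i) (cmp z \<mu>) = Some (cmp z \<nu>)" using T1 mu(3) by simp
        then show "\<exists>\<mu> \<nu>. \<mu> \<in> Mor \<and> \<nu> \<in> Mor \<and> rng \<mu> = src z \<and> rng \<nu> = src z \<and>
                   ?T (as i) (bs i) (cmp z \<mu>) = Some (cmp z \<nu>)" using mu nu by metis
      qed
    next
      assume A: "\<forall>i\<in>{1..n}. ?T (as i) (bs i) \<in> Iso ?S"
      show "t \<in> Iso ?S"
      proof (rule suff[OF cat lc tS])
        fix z y assume zy: "t z = Some y"
        obtain i where i: "i \<in> {1..n}" and zyi: "?T (as i) (bs i) z = Some y" using G2[OF zy] by blast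
        have I: "?T (as i) (bs i) \<in> Iso ?S" using A i by blast
        have gT: "good Mor rng src cmp (?T (as i) (bs i))" using S_good[OF cat lc TS[OF i]] .
        have zM: "z \<in> Mor" using good_D[OF cat lc gT zyi] by simp
        have dm: "?T (as i) (bs i) x \<noteq> None" if x: "x \<in> ?R z" for x
        proof -
          obtain h where h: "h \<in> Mor" "src z = rng h" "x = cmp z h"
            using x unfolding rideal_def by blast
          have "?T (as i) (bs i) x = Some (cmp y h)" using good_R[OF cat lc gT zyi h(1)] h by simp
          then show ?thesis by simp
        qed
        obtain x u where xu: "x \<in> ?R z" "u \<in> ?R z" "?T (as i) (bs i) u = Some x"
          using nec[OF cat lc I zM dm] by blast
        obtain \<mu> where mu: "\<mu> \<in> Mor" "src z = rng \<mu>" "u = cmp z \<mu>"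
          using xu(2) unfolding rideal_def by blast
        obtain \<nu> where nu: "\<nu> \<in> Mor" "src z = rng \<nu>" "x = cmp z \<nu>"
          using xu(1) unfolding rideal_def by blast
        have "t u = Some x" using G1[OF i xu(3)] .
        then have "t (cmp z \<mu>) = Some (cmp z \<nu>)" using mu(3) nu(3) by simp
        then show "\<exists>\<mu> \<nu>. \<mu> \<in> Mor \<and> \<nu> \<in> Mor \<and> rng \<mu> = src z \<and> rng \<nu> = src z \<and>
                   t (cmp z \<mu>) = Some (cmp z \<nu>)" using mu nu by metis
      qed
    qed
  qed
  show ?thesis by (rule conjI[OF P1 P2])
qed

end
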